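(* (Euler's formula for the number of spanning trees.) Let $G$ be a connected graph in which each edge $e_i$ has end points $p_i,q_i$. For any $s,t\in V(G)$, $$t(G_{st})=k\,t(G)+\frac{1}{4t(G)}\sum_{\substack{e_i\in E(G)\\ e_i\text{ not a bridge}}}\big[t(G_{p_is})-t(G_{p_it})-t(G_{q_is})+t(G_{q_it})\big]^2,$$ where $k$ is the number of bridges lying on any path connecting $s$ and $t$. Equivalently, $$t(G_{st})=\frac{1}{4t(G)}\sum_{e_i\in E(G)}\big[t(G_{p_is})-t(G_{p_it})-t(G_{q_is})+t(G_{q_it})\big]^2.$$
   Context: Graphs are finite and may have multiple edges and loops; $t(H)$ is the number of spanning trees of $H$; a graph with one vertex has $t=1$. $G_{xy}$ denotes the graph obtained from $G$ by identifying vertices $x$ and $y$, with the convention $t(G_{xx}):=0$. A bridge is an edge whose deletion disconnects $G$. *)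

theory Defs
  imports Complex_Main
begin

text \<open>A finite multigraph (multiple edges and loops allowed) is given by a vertex set
  V :: 'a set, an edge set E :: 'e set and an endpoint map ends :: 'e => 'a * 'a;
  edge e has end points fst (ends e) and snd (ends e).\<close>

definition multigraph :: "'a set \<Rightarrow> 'e set \<Rightarrow> ('e \<Rightarrow> 'a \<times> 'a) \<Rightarrow> bool" where
  "multigraph V E ends \<longleftrightarrow> finite V \<and> finite E \<and>
     (\<forall>e\<in>E. fst (ends e) \<in> V \<and> snd (ends e) \<in> V)"

definition adj :: "('e \<Rightarrow> 'a \<times> 'a) \<Rightarrow> 'e set \<Rightarrow> 'a \<Rightarrow> 'a \<Rightarrow> bool" where
  "adj ends F x y \<longleftrightarrow> (\<exists>e\<in>F. ends e = (x, y) \<or> ends e = (y, x))"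

definition reach :: "('e \<Rightarrow> 'a \<times> 'a) \<Rightarrow> 'e set \<Rightarrow> 'a \<Rightarrow> 'a \<Rightarrow> bool" where
  "reach ends F = (adj ends F)\<^sup>*\<^sup>*"

definition connected_on :: "'a set \<Rightarrow> 'e set \<Rightarrow> ('e \<Rightarrow> 'a \<times> 'a) \<Rightarrow> bool" where
  "connected_on V F ends \<longleftrightarrow> (\<forall>x\<in>V. \<forall>y\<in>V. reach ends F x y)"

definition connected_graph :: "'a set \<Rightarrow> 'e set \<Rightarrow> ('e \<Rightarrow> 'a \<times> 'a) \<Rightarrow> bool" where
  "connected_graph V E ends \<longleftrightarrow> multigraph V E ends \<and> V \<noteq> {} \<and> connected_on V E ends"

text \<open>An edge set F is acyclic if no edge of F lies on a cycle of F, i.e. for no e in F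
  are its end points joined in F - {e} (a loop is a cycle).\<close>
definition acyclic_edges :: "'e set \<Rightarrow> ('e \<Rightarrow> 'a \<times> 'a) \<Rightarrow> bool" where
  "acyclic_edges F ends \<longleftrightarrow>
     (\<forall>e\<in>F. \<not> reach ends (F - {e}) (fst (ends e)) (snd (ends e)))"

definition spanning_tree :: "'a set \<Rightarrow> 'e set \<Rightarrow> ('e \<Rightarrow> 'a \<times> 'a) \<Rightarrow> 'e set \<Rightarrow> bool" where
  "spanning_tree V E ends T \<longleftrightarrow> T \<subseteq> E \<and> connected_on V T ends \<and> acyclic_edges T ends"

definition num_trees :: "'a set \<Rightarrow> 'e set \<Rightarrow> ('e \<Rightarrow> 'a \<times> 'a) \<Rightarrow> nat" where
  "num_trees V E ends = card {T. spanning_tree V E ends T}"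

text \<open>G_xy: identify y with x. Convention t(G_xx) = 0.\<close>
definition ident :: "'a \<Rightarrow> 'a \<Rightarrow> 'a \<Rightarrow> 'a" where
  "ident x y v = (if v = y then x else v)"

definition num_trees_ident :: "'a set \<Rightarrow> 'e set \<Rightarrow> ('e \<Rightarrow> 'a \<times> 'a) \<Rightarrow> 'a \<Rightarrow> 'a \<Rightarrow> nat" where
  "num_trees_ident V E ends x y =
     (if x = y then 0
      else num_trees (ident x y ` V) E (map_prod (ident x y) (ident x y) \<circ> ends))"

definition is_bridge :: "'a set \<Rightarrow> 'e set \<Rightarrow> ('e \<Rightarrow> 'a \<times> 'a) \<Rightarrow> 'e \<Rightarrow> bool" where
  "is_bridge V E ends e \<longleftrightarrow> e \<in> E \<and> \<not> connected_on V (E - {e}) ends"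

definition is_path :: "'a set \<Rightarrow> 'e set \<Rightarrow> ('e \<Rightarrow> 'a \<times> 'a) \<Rightarrow> 'a \<Rightarrow> 'a \<Rightarrow> 'a list \<Rightarrow> 'e list \<Rightarrow> bool" where
  "is_path V E ends s t vs es \<longleftrightarrow>
     length vs = length es + 1 \<and> hd vs = s \<and> last vs = t \<and> distinct vs \<and> set vs \<subseteq> V \<and>
     (\<forall>i < length es. es ! i \<in> E \<and>
        (ends (es ! i) = (vs ! i, vs ! Suc i) \<or> ends (es ! i) = (vs ! Suc i, vs ! i)))"

definition bridges_between :: "'a set \<Rightarrow> 'e set \<Rightarrow> ('e \<Rightarrow> 'a \<times> 'a) \<Rightarrow> 'a \<Rightarrow> 'a \<Rightarrow> nat" where
  "bridges_between V E ends s t =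
     card {e. is_bridge V E ends e \<and> (\<exists>vs es. is_path V E ends s t vs es \<and> e \<in> set es)}"

end

theory Submission
  imports Defs
begin


lemma adj_sym: "adj ends F x y \<Longrightarrow> adj ends F y x"
  unfolding adj_def by blast

lemma adj_mono: "adj ends F x y \<Longrightarrow> F \<subseteq> G \<Longrightarrow> adj ends G x y"
  unfolding adj_def by blast

lemma reach_refl[simp]: "reach ends F x x"
  unfolding reach_def by simp

lemma reach_trans: "reach ends F x y \<Longrightarrow> reach ends F y z \<Longrightarrow> reach ends F x z"
  unfolding reach_def by (rule rtranclp_trans)

lemma adj_reach: "adj ends F x y \<Longrightarrow> reach ends F x y"
  unfolding reach_def by simp

lemma edge_reach: "e \<in> F \<Longrightarrow> reach ends F (fst (ends e)) (snd (ends e))"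
  by (rule adj_reach) (auto simp: adj_def intro: bexI[of _ e])

lemma edge_reach': "e \<in> F \<Longrightarrow> ends e = (p, q) \<Longrightarrow> reach ends F p q"
  using edge_reach[of e F ends] by simp

lemma reach_sym: "reach ends F x y \<Longrightarrow> reach ends F y x"
  unfolding reach_def
proof (induction rule: rtranclp_induct)
  case base then show ?case by simp
next
  case (step y z)
  then show ?case using adj_sym[OF step(2)]
    by (meson converse_rtranclp_into_rtranclp)
qed

lemma reach_mono: "reach ends F x y \<Longrightarrow> F \<subseteq> G \<Longrightarrow> reach ends G x y"
  unfolding reach_def
proof (induction rule: rtranclp_induct)
  case base then show ?case by simp
next
  case (step y z)
  then show ?case using adj_mono[OF step(2) step(4)]
    by (meson rtranclp.rtrancl_into_rtrancl)
qed

lemma reach_empty: "reach ends {} x y \<Longrightarrow> x = y"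
  unfolding reach_def
proof (induction rule: rtranclp_induct)
  case base then show ?case by simp
next
  case (step y z) then show ?case by (simp add: adj_def)
qed

lemma reach_remove:
  assumes "reach ends F a b"
  shows "reach ends (F - {e}) a b \<or> (e \<in> F \<and>
     ((reach ends (F - {e}) a (fst (ends e)) \<and> reach ends (F - {e}) (snd (ends e)) b) \<or>
      (reach ends (F - {e}) a (snd (ends e)) \<and> reach ends (F - {e}) (fst (ends e)) b)))"
  using assms unfolding reach_def
proof (induction rule: rtranclp_induct)
  case base then show ?case by simp
next
  case (step y z)
  from step(2) obtain f where f: "f \<in> F" "ends f = (y, z) \<or> ends f = (z, y)"
    unfolding adj_def by blast
  show ?case
  proof (cases "f = e")
    case False
    then have "adj ends (F - {e}) y z" using f unfolding adj_def by blast
    then have yz: "(adj ends (F - {e}))\<^sup>*\<^sup>* y z" by simp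
    from step(3) show ?thesis
      using yz by (meson rtranclp_trans)
  next
    case True
    then have eF: "e \<in> F" using f by simp
    from step(3) show ?thesis
    proof
      assume h: "(adj ends (F - {e}))\<^sup>*\<^sup>* a y"
      show ?thesis using f True h eF by auto
    next
      assume h: "e \<in> F \<and>
       ((adj ends (F - {e}))\<^sup>*\<^sup>* a (fst (ends e)) \<and> (adj ends (F - {e}))\<^sup>*\<^sup>* (snd (ends e)) y \<or>
        (adj ends (F - {e}))\<^sup>*\<^sup>* a (snd (ends e)) \<and> (adj ends (F - {e}))\<^sup>*\<^sup>* (fst (ends e)) y)"
      from f True consider "ends e = (y, z)" | "ends e = (z, y)" by blast
      then show ?thesis
      proof cases
        case 1
        then show ?thesis using h by auto
      next
        case 2
        then show ?thesis using h by auto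
      qed
    qed
  qed
qed

lemma reach_lift:
  assumes "reach ends (F - {e}) (fst (ends e)) (snd (ends e))" "reach ends F a b"
  shows "reach ends (F - {e}) a b"
  using reach_remove[OF assms(2), of e] assms(1)
  by (meson reach_sym reach_trans)

lemma exists_min:
  assumes "finite F" "P F"
  shows "\<exists>F'\<subseteq>F. P F' \<and> (\<forall>e\<in>F'. \<not> P (F' - {e}))"
  using assms
proof (induction F rule: finite_psubset_induct)
  case (psubset A)
  show ?case
  proof (cases "\<forall>e\<in>A. \<not> P (A - {e})")
    case True then show ?thesis using psubset by blast
  next
    case False
    then obtain e where "e \<in> A" "P (A - {e})" by blast
    then have "A - {e} \<subset> A" by blast
    from psubset.IH[OF this \<open>P (A - {e})\<close>] show ?thesis
      using \<open>A - {e} \<subset> A\<close> by blast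
  qed
qed

lemma acyclic_mono: "acyclic_edges F ends \<Longrightarrow> G \<subseteq> F \<Longrightarrow> acyclic_edges G ends"
  unfolding acyclic_edges_def
  by (meson Diff_mono order_refl reach_mono subsetD)

lemma acyclic_noloop: "acyclic_edges F ends \<Longrightarrow> e \<in> F \<Longrightarrow> fst (ends e) \<noteq> snd (ends e)"
  unfolding acyclic_edges_def by force


definition twoF :: "'a set \<Rightarrow> 'e set \<Rightarrow> ('e \<Rightarrow> 'a \<times> 'a) \<Rightarrow> 'a \<Rightarrow> 'a \<Rightarrow> 'e set set" where
  "twoF V E ends x y = {F. F \<subseteq> E \<and> acyclic_edges F ends \<and>
      (\<forall>v\<in>V. reach ends F v x \<or> reach ends F v y) \<and> \<not> reach ends F x y}"

definition gl :: "('e \<Rightarrow> 'a \<times> 'a) \<Rightarrow> 'e set \<Rightarrow> 'a \<Rightarrow> 'a \<Rightarrow> 'a \<Rightarrow> 'a \<Rightarrow> bool" where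
  "gl ends F x y = (\<lambda>u w. adj ends F u w \<or> (u = x \<and> w = y) \<or> (u = y \<and> w = x))\<^sup>*\<^sup>*"

lemma gl_char:
  "gl ends F x y a b \<longleftrightarrow> reach ends F a b \<or>
     ((reach ends F a x \<or> reach ends F a y) \<and> (reach ends F b x \<or> reach ends F b y))"
proof
  assume "gl ends F x y a b"
  then show "reach ends F a b \<or>
     ((reach ends F a x \<or> reach ends F a y) \<and> (reach ends F b x \<or> reach ends F b y))"
    unfolding gl_def
  proof (induction rule: rtranclp_induct)
    case base then show ?case by simp
  next
    case (step u w)
    from step(2) consider "adj ends F u w" | "u = x \<and> w = y" | "u = y \<and> w = x" by blast
    then show ?case
    proof cases
      case 1
      then have "reach ends F u w" by (rule adj_reach)
      then show ?thesis using step(3) by (meson reach_sym reach_trans)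
    next
      case 2 then show ?thesis using step(3) by auto
    next
      case 3 then show ?thesis using step(3) by auto
    qed
  qed
next
  have r: "reach ends F a b \<Longrightarrow> gl ends F x y a b" for a b
    unfolding gl_def reach_def
    by (rule mono_rtranclp[rule_format, of "adj ends F"]) auto
  have xy: "gl ends F x y x y" "gl ends F x y y x" unfolding gl_def by auto
  have tr: "gl ends F x y a b \<Longrightarrow> gl ends F x y b c \<Longrightarrow> gl ends F x y a c" for a b c
    unfolding gl_def by (rule rtranclp_trans)
  assume "reach ends F a b \<or>
     ((reach ends F a x \<or> reach ends F a y) \<and> (reach ends F b x \<or> reach ends F b y))"
  then show "gl ends F x y a b"
    using r xy tr reach_sym by metis
qed

lemma ident_adj:
  "adj ends F a b \<Longrightarrow> adj (map_prod (ident x y) (ident x y) \<circ> ends) F (ident x y a) (ident x y b)"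
  unfolding adj_def by force

lemma gl_ident:
  assumes "gl ends F x y a b"
  shows "reach (map_prod (ident x y) (ident x y) \<circ> ends) F (ident x y a) (ident x y b)"
  using assms unfolding gl_def
proof (induction rule: rtranclp_induct)
  case base then show ?case by simp
next
  case (step u w)
  from step(2) consider "adj ends F u w" | "u = x \<and> w = y" | "u = y \<and> w = x" by blast
  then show ?case
  proof cases
    case 1
    then show ?thesis using step(3) ident_adj[OF 1, of x y] adj_reach reach_trans by metis
  next
    case 2 then show ?thesis using step(3) by (auto simp: ident_def)
  next
    case 3 then show ?thesis using step(3) by (auto simp: ident_def)
  qed
qed

lemma ident_gl:
  assumes "reach (map_prod (ident x y) (ident x y) \<circ> ends) F (ident x y a) c'"
  shows "\<forall>c. ident x y c = c' \<longrightarrow> gl ends F x y a c"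
  using assms unfolding reach_def
proof (induction rule: rtranclp_induct)
  case base
  show ?case
  proof (intro allI impI)
    fix c assume "ident x y c = ident x y a"
    then have "c = a \<or> (c = x \<and> a = y) \<or> (c = y \<and> a = x)"
      by (auto simp: ident_def split: if_splits)
    then show "gl ends F x y a c" unfolding gl_def by auto
  qed
next
  case (step b' c')
  from step(2) obtain e where e: "e \<in> F"
    "(ident x y (fst (ends e)), ident x y (snd (ends e))) = (b', c') \<or>
     (ident x y (fst (ends e)), ident x y (snd (ends e))) = (c', b')"
    unfolding adj_def by (auto simp: map_prod_def split: prod.splits)
  have eq: "ident x y u = ident x y w \<Longrightarrow> gl ends F x y u w" for u w
  proof -
    assume "ident x y u = ident x y w"
    then have "u = w \<or> (u = x \<and> w = y) \<or> (u = y \<and> w = x)"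
      by (auto simp: ident_def split: if_splits)
    then show "gl ends F x y u w" unfolding gl_def by auto
  qed
  have tr: "gl ends F x y a b \<Longrightarrow> gl ends F x y b c \<Longrightarrow> gl ends F x y a c" for a b c
    unfolding gl_def by (rule rtranclp_trans)
  have pq: "gl ends F x y (fst (ends e)) (snd (ends e))" "gl ends F x y (snd (ends e)) (fst (ends e))"
    using edge_reach[OF e(1), of ends] reach_sym gl_char by metis+
  show ?case
  proof (intro allI impI)
    fix c assume c: "ident x y c = c'"
    from e(2) show "gl ends F x y a c"
    proof
      assume h: "(ident x y (fst (ends e)), ident x y (snd (ends e))) = (b', c')"
      have "gl ends F x y a (fst (ends e))" using step(3) h by auto
      then show ?thesis using h c pq eq tr by (metis prod.inject)
    next
      assume h: "(ident x y (fst (ends e)), ident x y (snd (ends e))) = (c', b')"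
      have "gl ends F x y a (snd (ends e))" using step(3) h by auto
      then show ?thesis using h c pq eq tr by (metis prod.inject)
    qed
  qed
qed

lemma reach_ident_iff:
  "reach (map_prod (ident x y) (ident x y) \<circ> ends) F (ident x y a) (ident x y b) \<longleftrightarrow> gl ends F x y a b"
  using ident_gl gl_ident by metis

lemma first_edge:
  assumes "finite F" "reach ends F x y" "x \<noteq> y"
  shows "\<exists>e\<in>F. (reach ends (F - {e}) x (fst (ends e)) \<and> reach ends (F - {e}) (snd (ends e)) y) \<or>
                (reach ends (F - {e}) x (snd (ends e)) \<and> reach ends (F - {e}) (fst (ends e)) y)"
proof -
  obtain F' where F': "F' \<subseteq> F" "reach ends F' x y" "\<forall>e\<in>F'. \<not> reach ends (F' - {e}) x y"
    using exists_min[of F "\<lambda>F. reach ends F x y"] assms by blast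
  have "F' \<noteq> {}" using F' assms(3) reach_empty by metis
  then obtain e where e: "e \<in> F'" by blast
  have m: "reach ends (F' - {e}) u w \<Longrightarrow> reach ends (F - {e}) u w" for u w
    using reach_mono F'(1) by (metis Diff_mono order_refl)
  from reach_remove[OF F'(2), of e] F'(3) e show ?thesis
    using m F'(1) by blast
qed

lemma image_ident: "x \<in> V \<Longrightarrow> ident x y ` V = V - {y} \<or> x = y"
  unfolding ident_def by (auto simp: image_def) 

lemma spanning_ident_iff:
  assumes mg: "multigraph V E ends" and xV: "x \<in> V" and yV: "y \<in> V" and xy: "x \<noteq> y"
  shows "spanning_tree (ident x y ` V) E (map_prod (ident x y) (ident x y) \<circ> ends) T \<longleftrightarrow>
         T \<in> twoF V E ends x y"
proof
  let ?e' = "map_prod (ident x y) (ident x y) \<circ> ends"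
  assume st: "spanning_tree (ident x y ` V) E ?e' T"
  then have TE: "T \<subseteq> E" and con: "connected_on (ident x y ` V) T ?e'" and ac: "acyclic_edges T ?e'"
    unfolding spanning_tree_def by auto
  have fT: "finite T" using TE mg unfolding multigraph_def by (meson finite_subset)
  have ac2: "\<And>e. e \<in> T \<Longrightarrow> \<not> gl ends (T - {e}) x y (fst (ends e)) (snd (ends e))"
    using ac unfolding acyclic_edges_def using reach_ident_iff by (metis comp_apply fst_map_prod snd_map_prod)
  have acy: "acyclic_edges T ends"
    unfolding acyclic_edges_def using ac2 gl_char by metis
  have all: "\<forall>v\<in>V. reach ends T v x \<or> reach ends T v y"
  proof
    fix v assume "v \<in> V"
    then have "reach ?e' T (ident x y v) (ident x y x)" using con xV unfolding connected_on_def by blast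
    then have "gl ends T x y v x" using reach_ident_iff by metis
    then show "reach ends T v x \<or> reach ends T v y" using gl_char by metis
  qed
  have nr: "\<not> reach ends T x y"
  proof
    assume "reach ends T x y"
    from first_edge[OF fT this xy] obtain e where "e \<in> T"
      "(reach ends (T - {e}) x (fst (ends e)) \<and> reach ends (T - {e}) (snd (ends e)) y) \<or>
       (reach ends (T - {e}) x (snd (ends e)) \<and> reach ends (T - {e}) (fst (ends e)) y)" by blast
    then show False using ac2 gl_char reach_sym by metis
  qed
  show "T \<in> twoF V E ends x y" unfolding twoF_def using TE acy all nr by blast
next
  let ?e' = "map_prod (ident x y) (ident x y) \<circ> ends"
  assume "T \<in> twoF V E ends x y"
  then have TE: "T \<subseteq> E" and acy: "acyclic_edges T ends" and all: "\<forall>v\<in>V. reach ends T v x \<or> reach ends T v y"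
    and nr: "\<not> reach ends T x y" unfolding twoF_def by auto
  have con: "connected_on (ident x y ` V) T ?e'"
    unfolding connected_on_def
  proof (intro ballI)
    fix a' b' assume "a' \<in> ident x y ` V" "b' \<in> ident x y ` V"
    then obtain a b where "a \<in> V" "b \<in> V" "a' = ident x y a" "b' = ident x y b" by blast
    moreover have "gl ends T x y a b" using all gl_char \<open>a \<in> V\<close> \<open>b \<in> V\<close> by metis
    ultimately show "reach ?e' T a' b'" using reach_ident_iff by metis
  qed
  have ac: "acyclic_edges T ?e'"
    unfolding acyclic_edges_def
  proof (intro ballI notI)
    fix e assume eT: "e \<in> T" and r: "reach ?e' (T - {e}) (fst (?e' e)) (snd (?e' e))"
    then have g: "gl ends (T - {e}) x y (fst (ends e)) (snd (ends e))"
      using reach_ident_iff by (metis comp_apply fst_map_prod snd_map_prod)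
    have n1: "\<not> reach ends (T - {e}) (fst (ends e)) (snd (ends e))"
      using acy eT unfolding acyclic_edges_def by blast
    have pq: "reach ends T (fst (ends e)) (snd (ends e))" using edge_reach[OF eT] .
    have m: "reach ends (T - {e}) u w \<Longrightarrow> reach ends T u w" for u w
      using reach_mono by (metis Diff_subset)
    from g n1 have "(reach ends (T - {e}) (fst (ends e)) x \<or> reach ends (T - {e}) (fst (ends e)) y) \<and>
      (reach ends (T - {e}) (snd (ends e)) x \<or> reach ends (T - {e}) (snd (ends e)) y)"
      using gl_char by metis
    then show False using n1 nr m pq reach_sym reach_trans by metis
  qed
  show "spanning_tree (ident x y ` V) E ?e' T"
    unfolding spanning_tree_def using TE con ac by blast
qed

lemma lemmaA:
  assumes mg: "multigraph V E ends" and xV: "x \<in> V" and yV: "y \<in> V"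
  shows "num_trees_ident V E ends x y = card (twoF V E ends x y)"
proof (cases "x = y")
  case True
  then have "twoF V E ends x y = {}" unfolding twoF_def by auto
  then show ?thesis using True unfolding num_trees_ident_def by simp
next
  case False
  have "{T. spanning_tree (ident x y ` V) E (map_prod (ident x y) (ident x y) \<circ> ends) T}
        = twoF V E ends x y" using spanning_ident_iff[OF assms False] by blast
  then show ?thesis unfolding num_trees_ident_def num_trees_def using False by simp
qed


lemma two_comp:
  assumes "reach ends F v p \<or> reach ends F v q" "reach ends F s p \<or> reach ends F s q"
    "reach ends F t p \<or> reach ends F t q" "\<not> reach ends F s t"
  shows "reach ends F v s \<or> reach ends F v t"
  using assms by (meson reach_sym reach_trans)

lemma join_comp:
  assumes "reach ends F p s \<or> reach ends F p t" "reach ends F q s \<or> reach ends F q t"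
    "\<not> reach ends F p q" "F \<subseteq> G" "reach ends G p q"
  shows "reach ends G s t"
proof -
  have m: "reach ends F u w \<Longrightarrow> reach ends G u w" for u w using reach_mono assms(4) by metis
  show ?thesis using assms(1,2,3,5) m by (meson reach_sym reach_trans)
qed

definition trees :: "'a set \<Rightarrow> 'e set \<Rightarrow> ('e \<Rightarrow> 'a \<times> 'a) \<Rightarrow> 'e set set" where
  "trees V E ends = {T. spanning_tree V E ends T}"

lemma finite_trees: "multigraph V E ends \<Longrightarrow> finite (trees V E ends)"
proof -
  assume "multigraph V E ends"
  then have "finite (Pow E)" unfolding multigraph_def by simp
  moreover have "trees V E ends \<subseteq> Pow E" unfolding trees_def spanning_tree_def by auto
  ultimately show ?thesis by (rule finite_subset[rotated])
qed

lemma finite_twoF: "multigraph V E ends \<Longrightarrow> finite (twoF V E ends x y)"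
proof -
  assume "multigraph V E ends"
  then have "finite (Pow E)" unfolding multigraph_def by simp
  moreover have "twoF V E ends x y \<subseteq> Pow E" unfolding twoF_def by auto
  ultimately show ?thesis by (rule finite_subset[rotated])
qed

lemma tree_exists:
  assumes "connected_graph V E ends"
  shows "trees V E ends \<noteq> {}"
proof -
  have mg: "multigraph V E ends" and con: "connected_on V E ends"
    using assms unfolding connected_graph_def by auto
  have fE: "finite E" using mg unfolding multigraph_def by simp
  obtain T where T: "T \<subseteq> E" "connected_on V T ends" "\<forall>e\<in>T. \<not> connected_on V (T - {e}) ends"
    using exists_min[OF fE, of "\<lambda>F. connected_on V F ends"] con by blast
  have "acyclic_edges T ends"
    unfolding acyclic_edges_def
  proof (intro ballI notI)
    fix e assume e: "e \<in> T" "reach ends (T - {e}) (fst (ends e)) (snd (ends e))"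
    have "connected_on V (T - {e}) ends"
      using T(2) reach_lift[OF e(2)] unfolding connected_on_def by blast
    then show False using T(3) e(1) by blast
  qed
  then have "T \<in> trees V E ends" unfolding trees_def spanning_tree_def using T by blast
  then show ?thesis by blast
qed

lemma tree_minus:
  assumes mg: "multigraph V E ends" and T: "T \<in> trees V E ends" and e: "e \<in> T" and v: "v \<in> V"
  shows "reach ends (T - {e}) v (fst (ends e)) \<or> reach ends (T - {e}) v (snd (ends e))"
proof -
  have "T \<subseteq> E" "connected_on V T ends" using T unfolding trees_def spanning_tree_def by auto
  then have "fst (ends e) \<in> V" using mg e unfolding multigraph_def by blast
  then have "reach ends T v (fst (ends e))" using \<open>connected_on V T ends\<close> v
    unfolding connected_on_def by blast
  from reach_remove[OF this, of e] show ?thesis by auto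
qed

lemma insert_tree:
  assumes mg: "multigraph V E ends" and eE: "e \<in> E"
    and F: "F \<in> twoF V E ends s t" and npq: "\<not> reach ends F (fst (ends e)) (snd (ends e))"
  shows "insert e F \<in> trees V E ends" "e \<notin> F"
proof -
  let ?p = "fst (ends e)" and ?q = "snd (ends e)"
  show eF: "e \<notin> F" using npq edge_reach by metis
  have FE: "F \<subseteq> E" and acy: "acyclic_edges F ends" and all: "\<forall>v\<in>V. reach ends F v s \<or> reach ends F v t"
    and nst: "\<not> reach ends F s t" using F unfolding twoF_def by auto
  have pV: "?p \<in> V" "?q \<in> V" using mg eE unfolding multigraph_def by auto
  have m: "reach ends F u w \<Longrightarrow> reach ends (insert e F) u w" for u w
    using reach_mono by (metis subset_insertI)
  have pq: "reach ends (insert e F) ?p ?q" using edge_reach[of e "insert e F"] by simp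
  have st: "reach ends (insert e F) s t"
  proof -
    from all pV have "(reach ends F ?p s \<or> reach ends F ?p t)" "(reach ends F ?q s \<or> reach ends F ?q t)" by auto
    then show ?thesis using join_comp[OF _ _ npq subset_insertI pq] by blast
  qed
  have con: "connected_on V (insert e F) ends"
    unfolding connected_on_def
  proof (intro ballI)
    fix a b assume "a \<in> V" "b \<in> V"
    then have "reach ends F a s \<or> reach ends F a t" "reach ends F b s \<or> reach ends F b t"
      using all by auto
    then have "reach ends (insert e F) a s" "reach ends (insert e F) b s"
      using st m by (meson reach_sym reach_trans)+
    then show "reach ends (insert e F) a b" using reach_sym reach_trans by fast
  qed
  have ac: "acyclic_edges (insert e F) ends"
    unfolding acyclic_edges_def
  proof (intro ballI notI)
    fix f assume f: "f \<in> insert e F" and r: "reach ends (insert e F - {f}) (fst (ends f)) (snd (ends f))"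
    show False
    proof (cases "f = e")
      case True
      then have "insert e F - {f} = F" using eF by auto
      then show False using r npq True by simp
    next
      case False
      then have fF: "f \<in> F" using f by simp
      have G: "insert e F - {f} - {e} = F - {f}" using eF by auto
      have n1: "\<not> reach ends (F - {f}) (fst (ends f)) (snd (ends f))"
        using acy fF unfolding acyclic_edges_def by blast
      have mf: "reach ends (F - {f}) u w \<Longrightarrow> reach ends F u w" for u w
        using reach_mono by (metis Diff_subset)
      have ff: "reach ends F (fst (ends f)) (snd (ends f))" using edge_reach[OF fF] .
      from reach_remove[OF r, of e] G n1 have
        "(reach ends (F - {f}) (fst (ends f)) ?p \<and> reach ends (F - {f}) ?q (snd (ends f))) \<or>
         (reach ends (F - {f}) (fst (ends f)) ?q \<and> reach ends (F - {f}) ?p (snd (ends f)))"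
        by auto
      then have "reach ends F (fst (ends f)) ?p \<and> reach ends F ?q (snd (ends f)) \<or>
         reach ends F (fst (ends f)) ?q \<and> reach ends F ?p (snd (ends f))" using mf by blast
      then have "reach ends F ?p ?q" using ff by (meson reach_sym reach_trans)
      then show False using npq by simp
    qed
  qed
  show "insert e F \<in> trees V E ends" unfolding trees_def spanning_tree_def
    using con ac FE eE by blast
qed

lemma remove_tree:
  assumes mg: "multigraph V E ends" and T: "T \<in> trees V E ends" and e: "e \<in> T"
    and nst: "\<not> reach ends (T - {e}) s t" and sV: "s \<in> V" and tV: "t \<in> V"
  shows "T - {e} \<in> twoF V E ends s t" "\<not> reach ends (T - {e}) (fst (ends e)) (snd (ends e))"
proof -
  let ?p = "fst (ends e)" and ?q = "snd (ends e)"
  have TE: "T \<subseteq> E" and acy: "acyclic_edges T ends" using T unfolding trees_def spanning_tree_def by auto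
  show npq: "\<not> reach ends (T - {e}) ?p ?q" using acy e unfolding acyclic_edges_def by blast
  have acy2: "acyclic_edges (T - {e}) ends" using acyclic_mono[OF acy] by blast
  have all: "\<forall>v\<in>V. reach ends (T - {e}) v s \<or> reach ends (T - {e}) v t"
  proof
    fix v assume v: "v \<in> V"
    have a: "reach ends (T - {e}) v ?p \<or> reach ends (T - {e}) v ?q" using tree_minus[OF mg T e v] .
    have b: "reach ends (T - {e}) s ?p \<or> reach ends (T - {e}) s ?q" using tree_minus[OF mg T e sV] .
    have c: "reach ends (T - {e}) t ?p \<or> reach ends (T - {e}) t ?q" using tree_minus[OF mg T e tV] .
    show "reach ends (T - {e}) v s \<or> reach ends (T - {e}) v t"
      using two_comp[OF a b c nst] .
  qed
  show "T - {e} \<in> twoF V E ends s t" unfolding twoF_def using TE acy2 all nst by blast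
qed

lemma bij_edge:
  assumes mg: "multigraph V E ends" and eE: "e \<in> E" and sV: "s \<in> V" and tV: "t \<in> V"
  shows "bij_betw (insert e) {F \<in> twoF V E ends s t. \<not> reach ends F (fst (ends e)) (snd (ends e))}
           {T \<in> trees V E ends. e \<in> T \<and> \<not> reach ends (T - {e}) s t}"
proof (rule bij_betw_byWitness[where f' = "\<lambda>T. T - {e}"])
  show "\<forall>F\<in>{F \<in> twoF V E ends s t. \<not> reach ends F (fst (ends e)) (snd (ends e))}. insert e F - {e} = F"
    using insert_tree(2)[OF mg eE] by auto
  show "\<forall>T\<in>{T \<in> trees V E ends. e \<in> T \<and> \<not> reach ends (T - {e}) s t}. insert e (T - {e}) = T"
    by auto
  show "insert e ` {F \<in> twoF V E ends s t. \<not> reach ends F (fst (ends e)) (snd (ends e))}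
        \<subseteq> {T \<in> trees V E ends. e \<in> T \<and> \<not> reach ends (T - {e}) s t}"
  proof
    fix T assume "T \<in> insert e ` {F \<in> twoF V E ends s t. \<not> reach ends F (fst (ends e)) (snd (ends e))}"
    then obtain F where F: "F \<in> twoF V E ends s t" "\<not> reach ends F (fst (ends e)) (snd (ends e))" "T = insert e F"
      by blast
    have "insert e F - {e} = F" using insert_tree(2)[OF mg eE F(1,2)] by auto
    moreover have "\<not> reach ends F s t" using F(1) unfolding twoF_def by blast
    ultimately show "T \<in> {T \<in> trees V E ends. e \<in> T \<and> \<not> reach ends (T - {e}) s t}"
      using insert_tree(1)[OF mg eE F(1,2)] F(3) by auto
  qed
  show "(\<lambda>T. T - {e}) ` {T \<in> trees V E ends. e \<in> T \<and> \<not> reach ends (T - {e}) s t}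
        \<subseteq> {F \<in> twoF V E ends s t. \<not> reach ends F (fst (ends e)) (snd (ends e))}"
    using remove_tree[OF mg _ _ _ sV tV] by blast
qed


lemma reach_cong1: "reach ends F b c \<Longrightarrow> reach ends F s c \<longleftrightarrow> reach ends F s b"
  by (meson reach_sym reach_trans)

lemma reach_cong2: "reach ends F b c \<Longrightarrow> reach ends F c x \<longleftrightarrow> reach ends F b x"
  by (meson reach_sym reach_trans)

lemma telescope:
  fixes \<phi> :: "'a \<Rightarrow> real"
  assumes acy: "acyclic_edges F ends" and fF: "finite F" and r: "reach ends F s c"
  shows "(\<Sum>e\<in>{e\<in>F. \<not> reach ends (F - {e}) s c}.
            (if reach ends (F - {e}) c (fst (ends e)) then \<phi> (fst (ends e)) - \<phi> (snd (ends e))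
             else \<phi> (snd (ends e)) - \<phi> (fst (ends e)))) = \<phi> c - \<phi> s"
  using r unfolding reach_def
proof (induction rule: rtranclp_induct)
  case base
  have "{e\<in>F. \<not> reach ends (F - {e}) s s} = {}" by simp
  then show ?case by simp
next
  case (step b c)
  define trm where "trm = (\<lambda>c e. if reach ends (F - {e}) c (fst (ends e)) then \<phi> (fst (ends e)) - \<phi> (snd (ends e))
             else \<phi> (snd (ends e)) - \<phi> (fst (ends e)))"
  define P where "P = (\<lambda>c. {e\<in>F. \<not> reach ends (F - {e}) s c})"
  have IH: "sum (trm b) (P b) = \<phi> b - \<phi> s" using step(3) unfolding trm_def P_def reach_def .
  from step(2) obtain f where f: "f \<in> F" "ends f = (b, c) \<or> ends f = (c, b)"
    unfolding adj_def by blast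
  have bc: "reach ends (F - {e}) b c" if "e \<noteq> f" for e
  proof -
    have "f \<in> F - {e}" using f that by simp
    then show ?thesis using f(2) edge_reach'[of f "F - {e}" ends] reach_sym by metis
  qed
  have Pe: "e \<in> P c \<longleftrightarrow> e \<in> P b" if "e \<noteq> f" for e
    unfolding P_def using reach_cong1[OF bc[OF that]] by simp
  have Te: "trm c e = trm b e" if "e \<noteq> f" for e
    unfolding trm_def using reach_cong2[OF bc[OF that]] by simp
  have nbc: "\<not> reach ends (F - {f}) b c"
  proof
    assume h: "reach ends (F - {f}) b c"
    have "\<not> reach ends (F - {f}) (fst (ends f)) (snd (ends f))"
      using acy f(1) unfolding acyclic_edges_def by blast
    then show False using f(2) h reach_sym by fastforce
  qed
  have fin: "finite (P x)" for x unfolding P_def using fF by simp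
  have sb: "reach ends F s b" using step(1) unfolding reach_def .
  have ncb: "\<not> reach ends (F - {f}) c b" using nbc reach_sym by metis
  have tfc: "trm c f = \<phi> c - \<phi> b"
    using f(2) nbc ncb unfolding trm_def by auto
  have tfb: "trm b f = \<phi> b - \<phi> c"
    using f(2) nbc ncb unfolding trm_def by auto
  show ?case
  proof (cases "reach ends (F - {f}) s c")
    case False
    have "reach ends (F - {f}) s b \<or> reach ends (F - {f}) s c"
      using reach_remove[OF sb, of f] f(2) by auto
    then have "reach ends (F - {f}) s b" using False by blast
    then have "f \<notin> P b" unfolding P_def by simp
    moreover have "f \<in> P c" unfolding P_def using False f by simp
    ultimately have Pc: "P c = insert f (P b)" using Pe by (intro set_eqI) (metis insert_iff)
    have "sum (trm c) (P c) = trm c f + sum (trm c) (P b)"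
      unfolding Pc using fin \<open>f \<notin> P b\<close> by simp
    also have "sum (trm c) (P b) = sum (trm b) (P b)"
      using Te \<open>f \<notin> P b\<close> by (metis sum.cong)
    finally have "sum (trm c) (P c) = \<phi> c - \<phi> s" using IH tfc by simp
    then show ?thesis unfolding trm_def P_def reach_def .
  next
    case True
    have nb: "\<not> reach ends (F - {f}) s b" using True nbc by (meson reach_sym reach_trans)
    then have "f \<in> P b" unfolding P_def using f by simp
    moreover have "f \<notin> P c" unfolding P_def using True by simp
    ultimately have Pb: "P b = insert f (P c)" using Pe by (intro set_eqI) (metis insert_iff)
    have "sum (trm b) (P b) = trm b f + sum (trm b) (P c)"
      unfolding Pb using fin \<open>f \<notin> P c\<close> by simp
    also have "sum (trm b) (P c) = sum (trm c) (P c)"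
      using Te \<open>f \<notin> P c\<close> by (metis sum.cong)
    finally have "sum (trm c) (P c) = \<phi> c - \<phi> s" using IH tfb by simp
    then show ?thesis unfolding trm_def P_def reach_def .
  qed
qed


definition acnt :: "'a set \<Rightarrow> 'e set \<Rightarrow> ('e \<Rightarrow> 'a \<times> 'a) \<Rightarrow> 'a \<Rightarrow> 'a \<Rightarrow> 'a \<Rightarrow> real" where
  "acnt V E ends s t v = real (card {F\<in>twoF V E ends s t. reach ends F v t})"

lemma card_filter_sum:
  "finite A \<Longrightarrow> real (card {x\<in>A. P x}) = (\<Sum>x\<in>A. if P x then 1 else 0)"
  by (simp add: sum.If_cases Int_def)

lemma twoF_sides:
  assumes "F \<in> twoF V E ends s t" "v \<in> V"
  shows "reach ends F v s \<longleftrightarrow> \<not> reach ends F v t"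
proof -
  have "reach ends F v s \<or> reach ends F v t" "\<not> reach ends F s t" using assms unfolding twoF_def by auto
  then show ?thesis by (meson reach_sym reach_trans)
qed

lemma side_flip:
  assumes "reach ends F p s \<longleftrightarrow> \<not> reach ends F p t" "reach ends F q s \<longleftrightarrow> \<not> reach ends F q t"
    "\<not> reach ends F p q"
  shows "reach ends F p t \<longleftrightarrow> \<not> reach ends F q t"
proof
  assume "reach ends F p t"
  then show "\<not> reach ends F q t" using assms(3) reach_sym reach_trans by metis
next
  assume "\<not> reach ends F q t"
  then have "reach ends F q s" using assms(2) by blast
  then show "reach ends F p t" using assms(1,3) reach_sym reach_trans by metis
qed

lemma step1:
  assumes mg: "multigraph V E ends" and eE: "e \<in> E" and sV: "s \<in> V" and tV: "t \<in> V"
  shows "acnt V E ends s t (fst (ends e)) - acnt V E ends s t (snd (ends e)) =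
    (\<Sum>T\<in>{T \<in> trees V E ends. e \<in> T \<and> \<not> reach ends (T - {e}) s t}.
        if reach ends (T - {e}) (fst (ends e)) t then 1 else -1)"
proof -
  let ?p = "fst (ends e)" and ?q = "snd (ends e)"
  let ?S = "twoF V E ends s t"
  define ind where "ind = (\<lambda>v F. if reach ends F v t then 1 else (0::real))"
  have fS: "finite ?S" using finite_twoF[OF mg] .
  have pV: "?p \<in> V" "?q \<in> V" using mg eE unfolding multigraph_def by auto
  have a: "acnt V E ends s t v = (\<Sum>F\<in>?S. ind v F)" for v
    unfolding acnt_def ind_def by (rule card_filter_sum[OF fS])
  have "acnt V E ends s t ?p - acnt V E ends s t ?q = (\<Sum>F\<in>?S. ind ?p F - ind ?q F)"
    unfolding a by (simp add: sum_subtractf)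
  also have "\<dots> = (\<Sum>F\<in>?S. if \<not> reach ends F ?p ?q then ind ?p F - ind ?q F else 0)"
  proof (rule sum.cong[OF refl])
    fix F assume "F \<in> ?S"
    show "ind ?p F - ind ?q F = (if \<not> reach ends F ?p ?q then ind ?p F - ind ?q F else 0)"
      unfolding ind_def using reach_cong2[of ends F ?p ?q t] by auto
  qed
  also have "\<dots> = (\<Sum>F\<in>{F\<in>?S. \<not> reach ends F ?p ?q}. ind ?p F - ind ?q F)"
    by (rule sum.inter_filter[OF fS, symmetric])
  also have "\<dots> = (\<Sum>F\<in>{F\<in>?S. \<not> reach ends F ?p ?q}.
                     (\<lambda>T. if reach ends (T - {e}) ?p t then 1 else -1) (insert e F))"
  proof (rule sum.cong[OF refl])
    fix F assume F: "F \<in> {F\<in>?S. \<not> reach ends F ?p ?q}"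
    then have FS: "F \<in> ?S" and Fn: "\<not> reach ends F ?p ?q" by auto
    have "e \<notin> F" by (rule insert_tree(2)[OF mg eE FS Fn])
    then have eF: "insert e F - {e} = F" by simp
    have "reach ends F ?p s \<longleftrightarrow> \<not> reach ends F ?p t" by (rule twoF_sides[OF FS pV(1)])
    moreover have "reach ends F ?q s \<longleftrightarrow> \<not> reach ends F ?q t" by (rule twoF_sides[OF FS pV(2)])
    moreover note Fn
    ultimately have "reach ends F ?p t \<longleftrightarrow> \<not> reach ends F ?q t"
      by (rule side_flip)
    then show "ind ?p F - ind ?q F = (\<lambda>T. if reach ends (T - {e}) ?p t then 1 else -1) (insert e F)"
      unfolding ind_def eF by auto
  qed
  also have "\<dots> = (\<Sum>T\<in>{T \<in> trees V E ends. e \<in> T \<and> \<not> reach ends (T - {e}) s t}.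
        if reach ends (T - {e}) ?p t then 1 else -1)"
    using sum.reindex_bij_betw[OF bij_edge[OF mg eE sV tV], of "\<lambda>T. if reach ends (T - {e}) ?p t then 1 else -1"]
    by simp
  finally show ?thesis .
qed


lemma main_sum:
  assumes cg: "connected_graph V E ends" and sV: "s \<in> V" and tV: "t \<in> V"
  shows "(\<Sum>e\<in>E. (acnt V E ends s t (fst (ends e)) - acnt V E ends s t (snd (ends e)))\<^sup>2)
       = real (card (trees V E ends)) * real (card (twoF V E ends s t))"
proof -
  have mg: "multigraph V E ends" using cg unfolding connected_graph_def by blast
  have fE: "finite E" using mg unfolding multigraph_def by blast
  have fT: "finite (trees V E ends)" by (rule finite_trees[OF mg])
  define a where "a = acnt V E ends s t"
  define D where "D = (\<lambda>e. a (fst (ends e)) - a (snd (ends e)))"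
  define \<sigma> where "\<sigma> = (\<lambda>T e. if reach ends (T - {e}) (fst (ends e)) t then 1 else (-1::real))"
  define P where "P = (\<lambda>T e. e \<in> T \<and> \<not> reach ends (T - {e}) s t)"
  have D: "D e = (\<Sum>T\<in>trees V E ends. if P T e then \<sigma> T e else 0)" if eE: "e \<in> E" for e
  proof -
    have "D e = (\<Sum>T\<in>{T \<in> trees V E ends. P T e}. \<sigma> T e)"
      unfolding D_def a_def \<sigma>_def P_def using step1[OF mg eE sV tV] by simp
    also have "\<dots> = (\<Sum>T\<in>trees V E ends. if P T e then \<sigma> T e else 0)"
      by (rule sum.inter_filter[OF fT])
    finally show ?thesis .
  qed
  have "(\<Sum>e\<in>E. (D e)\<^sup>2) = (\<Sum>e\<in>E. D e * (\<Sum>T\<in>trees V E ends. if P T e then \<sigma> T e else 0))"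
    by (rule sum.cong[OF refl]) (simp add: D[symmetric] power2_eq_square)
  also have "\<dots> = (\<Sum>e\<in>E. \<Sum>T\<in>trees V E ends. if P T e then \<sigma> T e * D e else 0)"
    unfolding sum_distrib_left by (intro sum.cong refl) auto
  also have "\<dots> = (\<Sum>T\<in>trees V E ends. \<Sum>e\<in>E. if P T e then \<sigma> T e * D e else 0)"
    by (rule sum.swap)
  also have "\<dots> = (\<Sum>T\<in>trees V E ends. a t - a s)"
  proof (rule sum.cong[OF refl])
    fix T assume T: "T \<in> trees V E ends"
    have TE: "T \<subseteq> E" and con: "connected_on V T ends" and acy: "acyclic_edges T ends"
      using T unfolding trees_def spanning_tree_def by auto
    have fTT: "finite T" using TE fE by (rule finite_subset)
    have st: "reach ends T s t" using con sV tV unfolding connected_on_def by blast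
    have "(\<Sum>e\<in>E. if P T e then \<sigma> T e * D e else 0) = (\<Sum>e\<in>{e\<in>E. P T e}. \<sigma> T e * D e)"
      by (rule sum.inter_filter[OF fE, symmetric])
    also have "{e\<in>E. P T e} = {e\<in>T. \<not> reach ends (T - {e}) s t}"
      unfolding P_def using TE by blast
    also have "(\<Sum>e\<in>{e\<in>T. \<not> reach ends (T - {e}) s t}. \<sigma> T e * D e) =
       (\<Sum>e\<in>{e\<in>T. \<not> reach ends (T - {e}) s t}.
            (if reach ends (T - {e}) t (fst (ends e)) then a (fst (ends e)) - a (snd (ends e))
             else a (snd (ends e)) - a (fst (ends e))))"
    proof (rule sum.cong[OF refl])
      fix e
      have "reach ends (T - {e}) t (fst (ends e)) \<longleftrightarrow> reach ends (T - {e}) (fst (ends e)) t"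
        using reach_sym by metis
      then show "\<sigma> T e * D e = (if reach ends (T - {e}) t (fst (ends e)) then a (fst (ends e)) - a (snd (ends e))
             else a (snd (ends e)) - a (fst (ends e)))"
        unfolding \<sigma>_def D_def by simp
    qed
    also have "\<dots> = a t - a s" by (rule telescope[OF acy fTT st])
    finally show "(\<Sum>e\<in>E. if P T e then \<sigma> T e * D e else 0) = a t - a s" .
  qed
  also have "\<dots> = real (card (trees V E ends)) * (a t - a s)" by simp
  also have "a t = real (card (twoF V E ends s t))" unfolding a_def acnt_def by simp
  also have "a s = 0" unfolding a_def acnt_def twoF_def by simp
  finally show ?thesis unfolding D_def a_def by simp
qed


lemma sw: "\<forall>w\<in>V. reach ends F w a \<or> reach ends F w b \<Longrightarrow> reach ends F b c \<Longrightarrow>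
   \<forall>w\<in>V. reach ends F w a \<or> reach ends F w c"
  by (blast intro: reach_trans)

lemma sw2: "\<forall>w\<in>V. reach ends F w a \<or> reach ends F w b \<Longrightarrow> reach ends F a c \<Longrightarrow>
   \<forall>w\<in>V. reach ends F w c \<or> reach ends F w b"
  by (blast intro: reach_trans)

lemma nr: "\<not> reach ends F a b \<Longrightarrow> reach ends F c b \<Longrightarrow> \<not> reach ends F a c"
  by (blast intro: reach_trans)

lemma nr2: "\<not> reach ends F a b \<Longrightarrow> reach ends F a c \<Longrightarrow> \<not> reach ends F c b"
  by (blast intro: reach_trans)

lemma g_lemma:
  assumes mg: "multigraph V E ends" and vV: "v \<in> V" and sV: "s \<in> V" and tV: "t \<in> V"
  shows "real (card (twoF V E ends v s)) - real (card (twoF V E ends v t))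
       = 2 * acnt V E ends s t v - real (card (twoF V E ends s t))"
proof -
  let ?S = "twoF V E ends s t"
  have f: "finite (twoF V E ends x y)" for x y by (rule finite_twoF[OF mg])
  define A1 where "A1 = {F\<in>twoF V E ends v s. \<not> reach ends F s t}"
  define A2 where "A2 = {F\<in>twoF V E ends v s. reach ends F s t}"
  define B1 where "B1 = {F\<in>twoF V E ends v t. \<not> reach ends F s t}"
  define B2 where "B2 = {F\<in>twoF V E ends v t. reach ends F s t}"
  have vs: "twoF V E ends v s = A1 \<union> A2" "A1 \<inter> A2 = {}" unfolding A1_def A2_def by auto
  have vt: "twoF V E ends v t = B1 \<union> B2" "B1 \<inter> B2 = {}" unfolding B1_def B2_def by auto
  have A1: "A1 = {F\<in>?S. reach ends F v t}"
  proof (intro set_eqI iffI)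
    fix F assume "F \<in> A1"
    then have h: "F \<subseteq> E" "acyclic_edges F ends" "\<forall>w\<in>V. reach ends F w v \<or> reach ends F w s"
      "\<not> reach ends F v s" "\<not> reach ends F s t" unfolding A1_def twoF_def by auto
    have "reach ends F t v \<or> reach ends F t s" using h(3) tV by blast
    then have tv: "reach ends F t v" using h(5) reach_sym[of ends F t s] by blast
    then have vt: "reach ends F v t" by (rule reach_sym)
    have "\<forall>w\<in>V. reach ends F w s \<or> reach ends F w t"
      using sw2[OF h(3) vt] by blast
    then show "F \<in> {F\<in>?S. reach ends F v t}" using h vt unfolding twoF_def by auto
  next
    fix F assume "F \<in> {F\<in>?S. reach ends F v t}"
    then have h: "F \<subseteq> E" "acyclic_edges F ends" "\<forall>w\<in>V. reach ends F w s \<or> reach ends F w t"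
      "\<not> reach ends F s t" "reach ends F v t" unfolding twoF_def by auto
    have "\<not> reach ends F s v" by (rule nr[OF h(4,5)])
    then have "\<not> reach ends F v s" using reach_sym[of ends F v s] by blast
    moreover have "\<forall>w\<in>V. reach ends F w v \<or> reach ends F w s"
      using sw2[OF _ reach_sym[OF h(5)], of V s] h(3) by blast
    ultimately show "F \<in> A1" using h unfolding A1_def twoF_def by auto
  qed
  have B1: "B1 = {F\<in>?S. reach ends F v s}"
  proof (intro set_eqI iffI)
    fix F assume "F \<in> B1"
    then have h: "F \<subseteq> E" "acyclic_edges F ends" "\<forall>w\<in>V. reach ends F w v \<or> reach ends F w t"
      "\<not> reach ends F v t" "\<not> reach ends F s t" unfolding B1_def twoF_def by auto
    have "reach ends F s v \<or> reach ends F s t" using h(3) sV by blast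
    then have sv: "reach ends F s v" using h(5) by blast
    then have vs: "reach ends F v s" by (rule reach_sym)
    have "\<forall>w\<in>V. reach ends F w s \<or> reach ends F w t"
      using sw2[OF h(3) vs] by blast
    then show "F \<in> {F\<in>?S. reach ends F v s}" using h vs unfolding twoF_def by auto
  next
    fix F assume "F \<in> {F\<in>?S. reach ends F v s}"
    then have h: "F \<subseteq> E" "acyclic_edges F ends" "\<forall>w\<in>V. reach ends F w s \<or> reach ends F w t"
      "\<not> reach ends F s t" "reach ends F v s" unfolding twoF_def by auto
    have "\<not> reach ends F v t" by (rule nr2[OF h(4) reach_sym[OF h(5)]])
    moreover have "\<forall>w\<in>V. reach ends F w v \<or> reach ends F w t"
      using sw2[OF h(3) reach_sym[OF h(5)]] by blast
    ultimately show "F \<in> B1" using h unfolding B1_def twoF_def by auto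
  qed
  have AB2: "A2 = B2"
  proof (intro set_eqI iffI)
    fix F assume "F \<in> A2"
    then have h: "F \<subseteq> E" "acyclic_edges F ends" "\<forall>w\<in>V. reach ends F w v \<or> reach ends F w s"
      "\<not> reach ends F v s" "reach ends F s t" unfolding A2_def twoF_def by auto
    have "\<not> reach ends F v t" by (rule nr[OF h(4) reach_sym[OF h(5)]])
    moreover have "\<forall>w\<in>V. reach ends F w v \<or> reach ends F w t"
      using sw[OF h(3,5)] .
    ultimately show "F \<in> B2" using h unfolding B2_def twoF_def by auto
  next
    fix F assume "F \<in> B2"
    then have h: "F \<subseteq> E" "acyclic_edges F ends" "\<forall>w\<in>V. reach ends F w v \<or> reach ends F w t"
      "\<not> reach ends F v t" "reach ends F s t" unfolding B2_def twoF_def by auto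
    have "\<not> reach ends F v s" by (rule nr[OF h(4,5)])
    moreover have "\<forall>w\<in>V. reach ends F w v \<or> reach ends F w s"
      using sw[OF h(3) reach_sym[OF h(5)]] .
    ultimately show "F \<in> A2" using h unfolding A2_def twoF_def by auto
  qed
  have fA: "finite A1" "finite A2" "finite B1" "finite B2"
    unfolding A1_def A2_def B1_def B2_def using f by auto
  have c1: "card (twoF V E ends v s) = card A1 + card A2"
    unfolding vs(1) by (rule card_Un_disjoint[OF fA(1,2) vs(2)])
  have c2: "card (twoF V E ends v t) = card B1 + card B2"
    unfolding vt(1) by (rule card_Un_disjoint[OF fA(3,4) vt(2)])
  have S1: "?S = {F\<in>?S. reach ends F v t} \<union> {F\<in>?S. reach ends F v s}"
    using twoF_sides[OF _ vV] by blast
  have S2: "{F\<in>?S. reach ends F v t} \<inter> {F\<in>?S. reach ends F v s} = {}"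
    using twoF_sides[OF _ vV] by blast
  have c3: "card ?S = card {F\<in>?S. reach ends F v t} + card {F\<in>?S. reach ends F v s}"
    by (subst S1, rule card_Un_disjoint[OF _ _ S2]) (use f[of s t] in auto)
  show ?thesis using c1 c2 c3 A1 B1 AB2 unfolding acnt_def by simp
qed


lemma bridge_D:
  assumes cg: "connected_graph V E ends" and sV: "s \<in> V" and tV: "t \<in> V"
    and br: "is_bridge V E ends e"
  shows "(acnt V E ends s t (fst (ends e)) - acnt V E ends s t (snd (ends e)))\<^sup>2 =
         (if reach ends (E - {e}) s t then 0 else (real (card (trees V E ends)))\<^sup>2)"
proof -
  let ?p = "fst (ends e)" and ?q = "snd (ends e)"
  have mg: "multigraph V E ends" and con: "connected_on V E ends"
    using cg unfolding connected_graph_def by auto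
  have eE: "e \<in> E" and ncon: "\<not> connected_on V (E - {e}) ends"
    using br unfolding is_bridge_def by auto
  have fT: "finite (trees V E ends)" by (rule finite_trees[OF mg])
  have b1: "e \<in> T" if T: "T \<in> trees V E ends" for T
  proof (rule ccontr)
    assume "e \<notin> T"
    then have "T \<subseteq> E - {e}" using T unfolding trees_def spanning_tree_def by auto
    moreover have "connected_on V T ends" using T unfolding trees_def spanning_tree_def by auto
    ultimately have "connected_on V (E - {e}) ends"
      unfolding connected_on_def using reach_mono by metis
    then show False using ncon by blast
  qed
  have b2: "\<not> reach ends (E - {e}) ?p ?q"
  proof
    assume h: "reach ends (E - {e}) ?p ?q"
    have "connected_on V (E - {e}) ends"
      using con reach_lift[OF h] unfolding connected_on_def by blast
    then show False using ncon by blast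
  qed
  have mT: "reach ends (T - {e}) x y \<Longrightarrow> reach ends (E - {e}) x y" if "T \<in> trees V E ends" for T x y
  proof -
    assume "reach ends (T - {e}) x y"
    moreover have "T - {e} \<subseteq> E - {e}" using that unfolding trees_def spanning_tree_def by auto
    ultimately show ?thesis by (rule reach_mono)
  qed
  have S1: "acnt V E ends s t ?p - acnt V E ends s t ?q =
    (\<Sum>T\<in>{T \<in> trees V E ends. e \<in> T \<and> \<not> reach ends (T - {e}) s t}.
        if reach ends (T - {e}) ?p t then 1 else -1)"
    by (rule step1[OF mg eE sV tV])
  show ?thesis
  proof (cases "reach ends (E - {e}) s t")
    case True
    have "{T \<in> trees V E ends. e \<in> T \<and> \<not> reach ends (T - {e}) s t} = {}"
    proof (intro equals0I)
      fix T assume "T \<in> {T \<in> trees V E ends. e \<in> T \<and> \<not> reach ends (T - {e}) s t}"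
      then have T: "T \<in> trees V E ends" and eT: "e \<in> T" and nst: "\<not> reach ends (T - {e}) s t" by auto
      have a: "reach ends (T - {e}) s ?p \<or> reach ends (T - {e}) s ?q" by (rule tree_minus[OF mg T eT sV])
      have b: "reach ends (T - {e}) t ?p \<or> reach ends (T - {e}) t ?q" by (rule tree_minus[OF mg T eT tV])
      have c: "\<not> reach ends (E - {e}) ?q ?p" using b2 reach_sym by metis
      from a b show False
      proof (elim disjE)
        assume "reach ends (T - {e}) s ?p" "reach ends (T - {e}) t ?p"
        then show False using nst reach_sym reach_trans by metis
      next
        assume "reach ends (T - {e}) s ?q" "reach ends (T - {e}) t ?q"
        then show False using nst reach_sym reach_trans by metis
      next
        assume "reach ends (T - {e}) s ?p" "reach ends (T - {e}) t ?q"
        then have "reach ends (E - {e}) s ?p" "reach ends (E - {e}) t ?q" using mT[OF T] by auto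
        then show False using True b2 reach_sym reach_trans by metis
      next
        assume "reach ends (T - {e}) s ?q" "reach ends (T - {e}) t ?p"
        then have "reach ends (E - {e}) s ?q" "reach ends (E - {e}) t ?p" using mT[OF T] by auto
        then show False using True b2 reach_sym reach_trans by metis
      qed
    qed
    then have "acnt V E ends s t ?p - acnt V E ends s t ?q = 0" unfolding S1 by (simp only: sum.empty)
    then show ?thesis using True by simp
  next
    case False
    define c0 where "c0 = (if reach ends (E - {e}) ?p t then 1 else (-1::real))"
    have set: "{T \<in> trees V E ends. e \<in> T \<and> \<not> reach ends (T - {e}) s t} = trees V E ends"
      using b1 mT False by blast
    have sig: "(if reach ends (T - {e}) ?p t then 1 else -1) = c0" if T: "T \<in> trees V E ends" for T
    proof -
      have "reach ends (T - {e}) ?p t \<longleftrightarrow> reach ends (E - {e}) ?p t"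
      proof
        assume "reach ends (T - {e}) ?p t" then show "reach ends (E - {e}) ?p t" by (rule mT[OF T])
      next
        assume pt: "reach ends (E - {e}) ?p t"
        show "reach ends (T - {e}) ?p t"
        proof (rule ccontr)
          assume npt: "\<not> reach ends (T - {e}) ?p t"
          have "reach ends (T - {e}) t ?p \<or> reach ends (T - {e}) t ?q"
            by (rule tree_minus[OF mg T b1[OF T] tV])
          then have "reach ends (T - {e}) t ?q" using npt reach_sym by metis
          then have "reach ends (E - {e}) t ?q" by (rule mT[OF T])
          then show False using pt b2 reach_trans by metis
        qed
      qed
      then show ?thesis unfolding c0_def by simp
    qed
    have "acnt V E ends s t ?p - acnt V E ends s t ?q = (\<Sum>T\<in>trees V E ends. c0)"
      unfolding S1 set using sig by (rule sum.cong[OF refl])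
    also have "\<dots> = real (card (trees V E ends)) * c0" by simp
    finally show ?thesis using False unfolding c0_def by (simp add: power_mult_distrib)
  qed
qed


lemma path_segment:
  assumes p: "is_path V E ends s t vs es"
  shows "j + d \<le> length es \<Longrightarrow> (\<forall>m. j \<le> m \<and> m < j + d \<longrightarrow> es ! m \<in> X) \<Longrightarrow>
         reach ends X (vs ! j) (vs ! (j + d))"
proof (induction d)
  case 0 then show ?case by simp
next
  case (Suc d)
  have IH: "reach ends X (vs ! j) (vs ! (j + d))" using Suc by auto
  have m: "j + d < length es" using Suc by simp
  have "es ! (j + d) \<in> X" using Suc by auto
  moreover have "ends (es ! (j + d)) = (vs ! (j + d), vs ! Suc (j + d)) \<or>
                 ends (es ! (j + d)) = (vs ! Suc (j + d), vs ! (j + d))"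
    using p m unfolding is_path_def by blast
  ultimately have "reach ends X (vs ! (j + d)) (vs ! Suc (j + d))"
    using edge_reach' reach_sym by metis
  then show ?case using IH reach_trans by (metis add_Suc_right)
qed

lemma path_ends:
  assumes "is_path V E ends s t vs es"
  shows "vs ! 0 = s" "vs ! length es = t"
proof -
  have l: "length vs = length es + 1" "hd vs = s" "last vs = t" using assms unfolding is_path_def by auto
  then have "vs \<noteq> []" by auto
  then show "vs ! 0 = s" using l hd_conv_nth by metis
  show "vs ! length es = t" using l \<open>vs \<noteq> []\<close> last_conv_nth by (metis add_diff_cancel_right')
qed

lemma path_unique_edge:
  assumes p: "is_path V E ends s t vs es" and i: "i < length es" and m: "m < length es"
    and eq: "es ! m = es ! i"
  shows "m = i"
proof -
  have d: "distinct vs" and l: "length vs = length es + 1" using p unfolding is_path_def by auto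
  have ei: "ends (es ! i) = (vs ! i, vs ! Suc i) \<or> ends (es ! i) = (vs ! Suc i, vs ! i)"
    and em: "ends (es ! m) = (vs ! m, vs ! Suc m) \<or> ends (es ! m) = (vs ! Suc m, vs ! m)"
    using p i m unfolding is_path_def by blast+
  have idx: "a < length vs \<Longrightarrow> b < length vs \<Longrightarrow> vs ! a = vs ! b \<Longrightarrow> a = b" for a b
    using d nth_eq_iff_index_eq by metis
  have b: "i < length vs" "Suc i < length vs" "m < length vs" "Suc m < length vs" using i m l by auto
  have E: "ends (es ! m) = ends (es ! i)" using eq by simp
  from ei show ?thesis
  proof
    assume a: "ends (es ! i) = (vs ! i, vs ! Suc i)"
    from em show ?thesis
    proof
      assume "ends (es ! m) = (vs ! m, vs ! Suc m)"
      then have "vs ! m = vs ! i" using a E by simp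
      then show ?thesis using idx b by blast
    next
      assume "ends (es ! m) = (vs ! Suc m, vs ! m)"
      then have "vs ! Suc m = vs ! i" "vs ! m = vs ! Suc i" using a E by simp_all
      then have "Suc m = i" "m = Suc i" using idx b by blast+
      then show ?thesis by simp
    qed
  next
    assume a: "ends (es ! i) = (vs ! Suc i, vs ! i)"
    from em show ?thesis
    proof
      assume "ends (es ! m) = (vs ! m, vs ! Suc m)"
      then have "vs ! m = vs ! Suc i" "vs ! Suc m = vs ! i" using a E by simp_all
      then have "Suc m = i" "m = Suc i" using idx b by blast+
      then show ?thesis by simp
    next
      assume "ends (es ! m) = (vs ! Suc m, vs ! m)"
      then have "vs ! m = vs ! i" using a E by simp
      then show ?thesis using idx b by blast
    qed
  qed
qed

lemma path_exists:
  assumes mg: "multigraph V E ends" and r: "reach ends E s t" and sV: "s \<in> V"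
  shows "\<exists>vs es. is_path V E ends s t vs es"
  using r unfolding reach_def
proof (induction rule: rtranclp_induct)
  case base
  have "is_path V E ends s s [s] []" unfolding is_path_def using sV by simp
  then show ?case by blast
next
  case (step b c)
  from step(3) obtain vs es where p: "is_path V E ends s b vs es" by blast
  from step(2) obtain f where f: "f \<in> E" "ends f = (b, c) \<or> ends f = (c, b)"
    unfolding adj_def by blast
  have cV: "c \<in> V" using mg f unfolding multigraph_def by (metis fst_conv snd_conv)
  have l: "length vs = length es + 1" and h: "hd vs = s" and la: "last vs = b" and d: "distinct vs"
    and sv: "set vs \<subseteq> V"
    and ed: "\<forall>i < length es. es ! i \<in> E \<and>
        (ends (es ! i) = (vs ! i, vs ! Suc i) \<or> ends (es ! i) = (vs ! Suc i, vs ! i))"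
    using p unfolding is_path_def by auto
  have ne: "vs \<noteq> []" using l by auto
  show ?case
  proof (cases "c \<in> set vs")
    case True
    then obtain k where k: "k < length vs" "vs ! k = c" by (metis in_set_conv_nth)
    have "is_path V E ends s c (take (Suc k) vs) (take k es)"
      unfolding is_path_def
    proof (intro conjI)
      show "length (take (Suc k) vs) = length (take k es) + 1" using k l by simp
      show "hd (take (Suc k) vs) = s" using h ne by simp
      show "last (take (Suc k) vs) = c" using k by (simp add: take_Suc_conv_app_nth)
      show "distinct (take (Suc k) vs)" using d by simp
      show "set (take (Suc k) vs) \<subseteq> V" using sv set_take_subset by fast
      show "\<forall>i<length (take k es). take k es ! i \<in> E \<and>
        (ends (take k es ! i) = (take (Suc k) vs ! i, take (Suc k) vs ! Suc i) \<or>
         ends (take k es ! i) = (take (Suc k) vs ! Suc i, take (Suc k) vs ! i))"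
        using ed by simp
    qed
    then show ?thesis by blast
  next
    case False
    have "is_path V E ends s c (vs @ [c]) (es @ [f])"
      unfolding is_path_def
    proof (intro conjI)
      show "length (vs @ [c]) = length (es @ [f]) + 1" using l by simp
      show "hd (vs @ [c]) = s" using h ne by simp
      show "last (vs @ [c]) = c" by simp
      show "distinct (vs @ [c])" using d False by simp
      show "set (vs @ [c]) \<subseteq> V" using sv cV by simp
      show "\<forall>i<length (es @ [f]). (es @ [f]) ! i \<in> E \<and>
        (ends ((es @ [f]) ! i) = ((vs @ [c]) ! i, (vs @ [c]) ! Suc i) \<or>
         ends ((es @ [f]) ! i) = ((vs @ [c]) ! Suc i, (vs @ [c]) ! i))"
      proof (intro allI impI)
        fix i assume i: "i < length (es @ [f])"
        show "(es @ [f]) ! i \<in> E \<and>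
        (ends ((es @ [f]) ! i) = ((vs @ [c]) ! i, (vs @ [c]) ! Suc i) \<or>
         ends ((es @ [f]) ! i) = ((vs @ [c]) ! Suc i, (vs @ [c]) ! i))"
        proof (cases "i < length es")
          case True
          then show ?thesis using ed l by (simp add: nth_append)
        next
          case False
          then have ii: "i = length es" using i by simp
          have "vs ! length es = b" using la ne l last_conv_nth by (metis add_diff_cancel_right')
          then show ?thesis using ii f l by (simp add: nth_append)
        qed
      qed
    qed
    then show ?thesis by blast
  qed
qed



lemma bridge_sep:
  assumes cg: "connected_graph V E ends" and br: "is_bridge V E ends e"
  shows "\<not> reach ends (E - {e}) (fst (ends e)) (snd (ends e))"
proof
  assume h: "reach ends (E - {e}) (fst (ends e)) (snd (ends e))"
  have con: "connected_on V E ends" using cg unfolding connected_graph_def by auto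
  have "connected_on V (E - {e}) ends"
    using con reach_lift[OF h] unfolding connected_on_def by blast
  then show False using br unfolding is_bridge_def by blast
qed

lemma bb_char:
  assumes cg: "connected_graph V E ends" and sV: "s \<in> V" and tV: "t \<in> V"
  shows "{e. is_bridge V E ends e \<and> (\<exists>vs es. is_path V E ends s t vs es \<and> e \<in> set es)} =
         {e\<in>E. is_bridge V E ends e \<and> \<not> reach ends (E - {e}) s t}"
proof (intro set_eqI iffI)
  have mg: "multigraph V E ends" and con: "connected_on V E ends"
    using cg unfolding connected_graph_def by auto
  fix e
  {
    assume "e \<in> {e. is_bridge V E ends e \<and> (\<exists>vs es. is_path V E ends s t vs es \<and> e \<in> set es)}"
    then obtain vs es where br: "is_bridge V E ends e" and p: "is_path V E ends s t vs es" and ees: "e \<in> set es"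
      by blast
    have eE: "e \<in> E" using br unfolding is_bridge_def by blast
    obtain i where i: "i < length es" "es ! i = e" using ees by (metis in_set_conv_nth)
    have esE: "\<forall>m<length es. es ! m \<in> E" using p unfolding is_path_def by blast
    have ne: "m < length es \<Longrightarrow> m \<noteq> i \<Longrightarrow> es ! m \<noteq> e" for m
      using path_unique_edge[OF p i(1)] i(2) by metis
    have ed: "ends e = (vs ! i, vs ! Suc i) \<or> ends e = (vs ! Suc i, vs ! i)"
      using p i unfolding is_path_def by blast
    have s1: "reach ends (E - {e}) (vs ! 0) (vs ! (0 + i))"
      by (rule path_segment[OF p]) (use i esE ne in auto)
    have s2: "reach ends (E - {e}) (vs ! Suc i) (vs ! (Suc i + (length es - Suc i)))"
      by (rule path_segment[OF p]) (use i esE ne in auto)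
    have "Suc i + (length es - Suc i) = length es" using i by simp
    then have s2': "reach ends (E - {e}) (vs ! Suc i) t" using s2 path_ends(2)[OF p] by (simp only:)
    have s1': "reach ends (E - {e}) s (vs ! i)" using s1 path_ends[OF p] by simp
    have nr: "\<not> reach ends (E - {e}) s t"
    proof
      assume "reach ends (E - {e}) s t"
      then have "reach ends (E - {e}) (vs ! i) (vs ! Suc i)"
        using s1' s2' reach_sym reach_trans by metis
      then show False using bridge_sep[OF cg br] ed reach_sym by fastforce
    qed
    show "e \<in> {e\<in>E. is_bridge V E ends e \<and> \<not> reach ends (E - {e}) s t}" using eE br nr by blast
  }
  {
    assume "e \<in> {e\<in>E. is_bridge V E ends e \<and> \<not> reach ends (E - {e}) s t}"
    then have eE: "e \<in> E" and br: "is_bridge V E ends e" and nr: "\<not> reach ends (E - {e}) s t" by auto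
    have "reach ends E s t" using con sV tV unfolding connected_on_def by blast
    then obtain vs es where p: "is_path V E ends s t vs es" using path_exists[OF mg _ sV] by blast
    have esE: "\<forall>m<length es. es ! m \<in> E" using p unfolding is_path_def by blast
    have "e \<in> set es"
    proof (rule ccontr)
      assume "e \<notin> set es"
      then have "\<forall>m. 0 \<le> m \<and> m < 0 + length es \<longrightarrow> es ! m \<in> E - {e}" using esE by (auto simp: in_set_conv_nth)
      then have "reach ends (E - {e}) (vs ! 0) (vs ! (0 + length es))"
        using path_segment[OF p, of 0 "length es" "E - {e}"] by simp
      then show False using path_ends[OF p] nr by simp
    qed
    then show "e \<in> {e. is_bridge V E ends e \<and> (\<exists>vs es. is_path V E ends s t vs es \<and> e \<in> set es)}"
      using br p by blast
  }
qed



lemma sum_split_filter: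
  fixes f :: "'e \<Rightarrow> real"
  assumes "finite E"
  shows "(\<Sum>e\<in>E. f e) = (\<Sum>e\<in>{e\<in>E. P e}. f e) + (\<Sum>e\<in>{e\<in>E. \<not> P e}. f e)"
proof -
  have "(\<Sum>e\<in>{e\<in>E. P e}. f e) + (\<Sum>e\<in>{e\<in>E. \<not> P e}. f e)
      = (\<Sum>e\<in>E. if P e then f e else 0) + (\<Sum>e\<in>E. if \<not> P e then f e else 0)"
    by (simp only: sum.inter_filter[OF assms])
  also have "\<dots> = (\<Sum>e\<in>E. (if P e then f e else 0) + (if \<not> P e then f e else 0))"
    by (rule sum.distrib[symmetric])
  also have "\<dots> = (\<Sum>e\<in>E. f e)" by (rule sum.cong) auto
  finally show ?thesis by simp
qed

theorem theorem4p14: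
  fixes V :: "'a set" and E :: "'e set" and ends :: "'e \<Rightarrow> 'a \<times> 'a" and s t :: 'a
  assumes "connected_graph V E ends" and "s \<in> V" and "t \<in> V"
  defines "tG \<equiv> real (num_trees V E ends)"
      and "sq \<equiv> (\<lambda>e. (real (num_trees_ident V E ends (fst (ends e)) s)
                        - real (num_trees_ident V E ends (fst (ends e)) t)
                        - real (num_trees_ident V E ends (snd (ends e)) s)
                        + real (num_trees_ident V E ends (snd (ends e)) t))\<^sup>2)"
  shows "(real (num_trees_ident V E ends s t)
           = real (bridges_between V E ends s t) * tG
             + (1 / (4 * tG)) * (\<Sum>e\<in>{e\<in>E. \<not> is_bridge V E ends e}. sq e))
         \<and> (real (num_trees_ident V E ends s t) = (1 / (4 * tG)) * (\<Sum>e\<in>E. sq e))"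
proof -
  note cg = assms(1) and sV = assms(2) and tV = assms(3)
  have mg: "multigraph V E ends" using cg unfolding connected_graph_def by blast
  have fE: "finite E" using mg unfolding multigraph_def by blast
  define S where "S = real (card (twoF V E ends s t))"
  define a where "a = acnt V E ends s t"
  have N: "real (num_trees_ident V E ends x y) = real (card (twoF V E ends x y))" if "x \<in> V" "y \<in> V" for x y
    using lemmaA[OF mg that] by simp
  have tGc: "tG = real (card (trees V E ends))" unfolding tG_def num_trees_def trees_def by simp
  have tGpos: "tG > 0"
  proof -
    have "trees V E ends \<noteq> {}" by (rule tree_exists[OF cg])
    then have "card (trees V E ends) > 0" using finite_trees[OF mg] by (simp add: card_gt_0_iff)
    then show ?thesis using tGc by simp
  qed
  have g: "real (num_trees_ident V E ends v s) - real (num_trees_ident V E ends v t) = 2 * a v - S"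
    if "v \<in> V" for v
    using N[OF that sV] N[OF that tV] g_lemma[OF mg that sV tV] unfolding a_def S_def by simp
  have sqe: "sq e = 4 * (a (fst (ends e)) - a (snd (ends e)))\<^sup>2" if eE: "e \<in> E" for e
  proof -
    have pV: "fst (ends e) \<in> V" "snd (ends e) \<in> V" using mg eE unfolding multigraph_def by auto
    have "sq e = ((real (num_trees_ident V E ends (fst (ends e)) s)
                        - real (num_trees_ident V E ends (fst (ends e)) t))
                  - (real (num_trees_ident V E ends (snd (ends e)) s)
                        - real (num_trees_ident V E ends (snd (ends e)) t)))\<^sup>2"
      unfolding sq_def by (simp add: algebra_simps)
    also have "\<dots> = ((2 * a (fst (ends e)) - S) - (2 * a (snd (ends e)) - S))\<^sup>2"
      using g[OF pV(1)] g[OF pV(2)] by simp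
    also have "\<dots> = 4 * (a (fst (ends e)) - a (snd (ends e)))\<^sup>2"
      by (simp add: power2_eq_square algebra_simps)
    finally show ?thesis .
  qed
  have tot: "(\<Sum>e\<in>E. sq e) = 4 * tG * S"
  proof -
    have "(\<Sum>e\<in>E. sq e) = (\<Sum>e\<in>E. 4 * (a (fst (ends e)) - a (snd (ends e)))\<^sup>2)"
      using sqe by (rule sum.cong[OF refl])
    also have "\<dots> = 4 * (\<Sum>e\<in>E. (a (fst (ends e)) - a (snd (ends e)))\<^sup>2)"
      by (simp add: sum_distrib_left)
    also have "(\<Sum>e\<in>E. (a (fst (ends e)) - a (snd (ends e)))\<^sup>2) = tG * S"
      using main_sum[OF cg sV tV] unfolding a_def S_def tGc .
    finally show ?thesis by simp
  qed
  have Nst: "real (num_trees_ident V E ends s t) = S" using N[OF sV tV] unfolding S_def .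
  have c2: "real (num_trees_ident V E ends s t) = (1 / (4 * tG)) * (\<Sum>e\<in>E. sq e)"
    using Nst tot tGpos by simp
  define B where "B = {e\<in>E. is_bridge V E ends e \<and> \<not> reach ends (E - {e}) s t}"
  have kB: "bridges_between V E ends s t = card B"
    unfolding bridges_between_def B_def using bb_char[OF cg sV tV] by simp
  have bsum: "(\<Sum>e\<in>{e\<in>E. is_bridge V E ends e}. sq e) = 4 * tG\<^sup>2 * real (card B)"
  proof -
    have "(\<Sum>e\<in>{e\<in>E. is_bridge V E ends e}. sq e) =
          (\<Sum>e\<in>{e\<in>E. is_bridge V E ends e}. if \<not> reach ends (E - {e}) s t then 4 * tG\<^sup>2 else 0)"
    proof (rule sum.cong[OF refl])
      fix e assume "e \<in> {e\<in>E. is_bridge V E ends e}"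
      then have eE: "e \<in> E" and br: "is_bridge V E ends e" by auto
      show "sq e = (if \<not> reach ends (E - {e}) s t then 4 * tG\<^sup>2 else 0)"
        using sqe[OF eE] bridge_D[OF cg sV tV br] unfolding a_def tGc by simp
    qed
    also have "\<dots> = (\<Sum>e\<in>{x\<in>{e\<in>E. is_bridge V E ends e}. \<not> reach ends (E - {x}) s t}. 4 * tG\<^sup>2)"
      by (rule sum.inter_filter[symmetric]) (use fE in simp)
    also have "{x\<in>{e\<in>E. is_bridge V E ends e}. \<not> reach ends (E - {x}) s t} = B"
      unfolding B_def by blast
    finally show ?thesis by simp
  qed
  have c1: "real (num_trees_ident V E ends s t)
           = real (bridges_between V E ends s t) * tG
             + (1 / (4 * tG)) * (\<Sum>e\<in>{e\<in>E. \<not> is_bridge V E ends e}. sq e)"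
  proof -
    have "(\<Sum>e\<in>E. sq e) = (\<Sum>e\<in>{e\<in>E. is_bridge V E ends e}. sq e) + (\<Sum>e\<in>{e\<in>E. \<not> is_bridge V E ends e}. sq e)"
      by (rule sum_split_filter[OF fE])
    then have "(\<Sum>e\<in>{e\<in>E. \<not> is_bridge V E ends e}. sq e) = 4 * tG * S - 4 * tG\<^sup>2 * real (card B)"
      using tot bsum by simp
    then show ?thesis using Nst kB tGpos by (simp add: field_simps power2_eq_square)
  qed
  show ?thesis using c1 c2 by blast
qed


end
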